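(* Consider the parallel service system with $\lambda<\sum_{n=1}^N\mu_n$ under the softmax WSQ policy with sufficiently small temperature $\iota>0$. Then for every $w\in\mathbb{R}^N_{>0}$, the Markov chain of queue lengths induced by $\pi_w$ is irreducible, ergodic and positive Harris recurrent.
   Context: Parallel service system: $N$ parallel queues with state $x\in\mathbb{Z}^N_{\ge0}$ (queue lengths), Poisson arrivals at rate $\lambda>0$, exponential service rates $\mu_n>0$ at server $n$; an arriving job joins queue $a$ with probability $\pi_w(a\mid x)$. This gives a Markov chain with transitions $x\to x+e_a$ at rate $\lambda\pi_w(a\mid x)$ and $x\to x-e_n$ at rate $\mu_n\mathbb{I}_{\{x_n\ge1\}}$ (equivalently its embedded jump chain $x[k]$, the state after the $k$-th transition). Softmax WSQ policy with weights $w\in\mathbb{R}^N_{>0}$ and temperature $\iota>0$: $\pi_w(a\mid x)=\exp(-w_a(2x_a+1)/\iota)/\sum_{b=1}^N\exp(-w_b(2x_b+1)/\iota)$. *)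

theory Defs
  imports "HOL-Probability.Probability"
begin

fun nstep :: "('s \<Rightarrow> 's pmf) \<Rightarrow> nat \<Rightarrow> 's \<Rightarrow> 's pmf" where
  "nstep K 0 x = return_pmf x"
| "nstep K (Suc n) x = bind_pmf (nstep K n x) K"

text \<open>First-passage probabilities: fpass K n x y = P_x(first visit to y at time n+1).\<close>
fun fpass :: "('s \<Rightarrow> 's pmf) \<Rightarrow> nat \<Rightarrow> 's \<Rightarrow> 's \<Rightarrow> real" where
  "fpass K 0 x y = pmf (K x) y"
| "fpass K (Suc n) x y =
     measure_pmf.expectation (K x) (\<lambda>z. if z = y then 0 else fpass K n z y)"

text \<open>P_x(tau_y < infinity), with tau_y = inf {n >= 1. X_n = y}.\<close>
definition hit_prob :: "('s \<Rightarrow> 's pmf) \<Rightarrow> 's \<Rightarrow> 's \<Rightarrow> real" where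
  "hit_prob K x y = (\<Sum>n. fpass K n x y)"

definition mc_irreducible :: "('s \<Rightarrow> 's pmf) \<Rightarrow> bool" where
  "mc_irreducible K \<longleftrightarrow> (\<forall>x y. \<exists>n. pmf (nstep K n x) y > 0)"

definition mc_stationary :: "('s \<Rightarrow> 's pmf) \<Rightarrow> 's pmf \<Rightarrow> bool" where
  "mc_stationary K p \<longleftrightarrow> bind_pmf p K = p"

definition mc_ergodic :: "('s \<Rightarrow> 's pmf) \<Rightarrow> bool" where
  "mc_ergodic K \<longleftrightarrow> (\<exists>p. mc_stationary K p \<and> (\<forall>q. mc_stationary K q \<longrightarrow> q = p) \<and>
      (\<forall>x y. (\<lambda>n. (\<Sum>k<n. pmf (nstep K k x) y) / real n) \<longlonglongrightarrow> pmf p y))"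

text \<open>Harris recurrence on a countable space (irreducibility measure = counting
  measure): irreducible and every state is reached with probability one from
  every initial state.\<close>
definition mc_harris_recurrent :: "('s \<Rightarrow> 's pmf) \<Rightarrow> bool" where
  "mc_harris_recurrent K \<longleftrightarrow> mc_irreducible K \<and> (\<forall>x y. hit_prob K x y = 1)"

definition mc_positive_harris :: "('s \<Rightarrow> 's pmf) \<Rightarrow> bool" where
  "mc_positive_harris K \<longleftrightarrow> mc_harris_recurrent K \<and> (\<exists>p. mc_stationary K p)"

text \<open>Servers are indexed by a finite type 'n (N = CARD('n)); states are
  queue-length vectors 'n => nat.\<close>

definition softmax_wsq ::
  "('n::finite \<Rightarrow> real) \<Rightarrow> real \<Rightarrow> ('n \<Rightarrow> nat) \<Rightarrow> 'n \<Rightarrow> real" where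
  "softmax_wsq w \<iota> x a =
     exp (- w a * (2 * real (x a) + 1) / \<iota>) /
     (\<Sum>b\<in>UNIV. exp (- w b * (2 * real (x b) + 1) / \<iota>))"

definition qs_rate ::
  "real \<Rightarrow> ('n::finite \<Rightarrow> real) \<Rightarrow> ('n \<Rightarrow> real) \<Rightarrow> real \<Rightarrow> ('n \<Rightarrow> nat) \<Rightarrow> ('n \<Rightarrow> nat) \<Rightarrow> real" where
  "qs_rate lam mu w \<iota> x y =
     (\<Sum>a\<in>UNIV. if y = x(a := x a + 1) then lam * softmax_wsq w \<iota> x a else 0)
   + (\<Sum>n\<in>UNIV. if 1 \<le> x n \<and> y = x(n := x n - 1) then mu n else 0)"

definition qs_total_rate ::
  "real \<Rightarrow> ('n::finite \<Rightarrow> real) \<Rightarrow> ('n \<Rightarrow> nat) \<Rightarrow> real" where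
  "qs_total_rate lam mu x = lam + (\<Sum>n\<in>UNIV. if 1 \<le> x n then mu n else 0)"

text \<open>Embedded jump chain x[k] of the queue-length process.\<close>
definition qs_jump_kernel ::
  "real \<Rightarrow> ('n::finite \<Rightarrow> real) \<Rightarrow> ('n \<Rightarrow> real) \<Rightarrow> real \<Rightarrow> ('n \<Rightarrow> nat) \<Rightarrow> ('n \<Rightarrow> nat) pmf" where
  "qs_jump_kernel lam mu w \<iota> x =
     embed_pmf (\<lambda>y. qs_rate lam mu w \<iota> x y / qs_total_rate lam mu x)"

end

theory Submission
  imports Defs
begin


locale fmc =
  fixes K :: "'s \<Rightarrow> 's pmf"
  assumes fin: "\<And>x. finite (set_pmf (K x))"
begin

definition Ex :: "'s \<Rightarrow> ('s \<Rightarrow> real) \<Rightarrow> real" where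
  "Ex x g = (\<Sum>z\<in>set_pmf (K x). pmf (K x) z * g z)"

lemma Ex_cong: "(\<And>z. z \<in> set_pmf (K x) \<Longrightarrow> g z = h z) \<Longrightarrow> Ex x g = Ex x h"
  unfolding Ex_def by (auto intro!: sum.cong)

lemma Ex_mono: "(\<And>z. z \<in> set_pmf (K x) \<Longrightarrow> g z \<le> h z) \<Longrightarrow> Ex x g \<le> Ex x h"
  unfolding Ex_def by (auto intro!: sum_mono mult_left_mono)

lemma Ex_add: "Ex x (\<lambda>z. g z + h z) = Ex x g + Ex x h"
  unfolding Ex_def by (simp add: distrib_left sum.distrib)

lemma Ex_diff: "Ex x (\<lambda>z. g z - h z) = Ex x g - Ex x h"
  unfolding Ex_def by (simp add: right_diff_distrib sum_subtractf)

lemma Ex_cmult: "Ex x (\<lambda>z. c * g z) = c * Ex x g"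
  unfolding Ex_def by (simp add: sum_distrib_left algebra_simps)

lemma Ex_const: "Ex x (\<lambda>z. c) = c"
  unfolding Ex_def by (simp add: sum_distrib_right[symmetric] sum_pmf_eq_1 fin)

lemma Ex_sum: "Ex x (\<lambda>z. \<Sum>i\<in>I. g i z) = (\<Sum>i\<in>I. Ex x (g i))"
  unfolding Ex_def by (simp add: sum_distrib_left sum.swap[of _ I])

lemma Ex_nonneg: "(\<And>z. z \<in> set_pmf (K x) \<Longrightarrow> 0 \<le> g z) \<Longrightarrow> 0 \<le> Ex x g"
  unfolding Ex_def by (auto intro!: sum_nonneg)

lemma Ex_ge_term: "(\<And>z. z \<in> set_pmf (K x) \<Longrightarrow> 0 \<le> g z) \<Longrightarrow> z \<in> set_pmf (K x)
   \<Longrightarrow> pmf (K x) z * g z \<le> Ex x g"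
  unfolding Ex_def by (rule member_le_sum) (auto simp: fin)

lemma Ex_expectation: "measure_pmf.expectation (K x) g = Ex x g"
  unfolding Ex_def by (subst integral_measure_pmf_real[OF fin]) (auto simp: mult.commute)

lemma Ex_ind: "Ex x (\<lambda>z. if z = y then 1 else 0) = pmf (K x) y"
  unfolding Ex_def using fin[of x] by (auto simp: set_pmf_iff if_distrib cong: if_cong)

lemma nstep_Suc': "nstep K (Suc n) x = K x \<bind> (\<lambda>z. nstep K n z)"
proof (induction n arbitrary: x)
  case 0
  then show ?case by (simp add: bind_return_pmf bind_return_pmf')
next
  case (Suc n)
  have "nstep K (Suc (Suc n)) x = nstep K (Suc n) x \<bind> K" by simp
  also have "\<dots> = (K x \<bind> nstep K n) \<bind> K" by (simp only: Suc)
  also have "\<dots> = K x \<bind> (\<lambda>z. nstep K n z \<bind> K)" by (simp only: bind_assoc_pmf)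
  finally show ?case by (simp only: nstep.simps)
qed

lemma P_Suc: "pmf (nstep K (Suc n) x) y = Ex x (\<lambda>z. pmf (nstep K n z) y)"
  by (simp only: nstep_Suc' pmf_bind Ex_expectation)

lemma P_0: "pmf (nstep K 0 x) y = (if x = y then 1 else 0)"
  by (simp add: pmf_return indicator_def)


primrec Pg :: "nat \<Rightarrow> ('s \<Rightarrow> real) \<Rightarrow> 's \<Rightarrow> real" where
  "Pg 0 g x = g x"
| "Pg (Suc n) g x = Ex x (Pg n g)"

lemma Pg_mono: "(\<And>z. g z \<le> h z) \<Longrightarrow> Pg n g x \<le> Pg n h x"
  by (induction n arbitrary: x) (auto intro!: Ex_mono)

lemma Pg_add: "Pg n (\<lambda>z. g z + h z) x = Pg n g x + Pg n h x"
proof (induction n arbitrary: x)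
  case (Suc n)
  have "Ex x (Pg n (\<lambda>z. g z + h z)) = Ex x (\<lambda>z. Pg n g z + Pg n h z)"
    using Suc by (intro Ex_cong) auto
  then show ?case by (simp add: Ex_add)
qed simp

lemma Pg_diff: "Pg n (\<lambda>z. g z - h z) x = Pg n g x - Pg n h x"
proof (induction n arbitrary: x)
  case (Suc n)
  have "Ex x (Pg n (\<lambda>z. g z - h z)) = Ex x (\<lambda>z. Pg n g z - Pg n h z)"
    using Suc by (intro Ex_cong) auto
  then show ?case by (simp add: Ex_diff)
qed simp

lemma Pg_cmult: "Pg n (\<lambda>z. c * g z) x = c * Pg n g x"
proof (induction n arbitrary: x)
  case (Suc n)
  have "Ex x (Pg n (\<lambda>z. c * g z)) = Ex x (\<lambda>z. c * Pg n g z)"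
    using Suc by (intro Ex_cong) auto
  then show ?case by (simp add: Ex_cmult)
qed simp

lemma Pg_const: "Pg n (\<lambda>z. c) x = c"
proof (induction n arbitrary: x)
  case (Suc n)
  have "Ex x (Pg n (\<lambda>z. c)) = Ex x (\<lambda>z. c)"
    using Suc by (intro Ex_cong) auto
  then show ?case by (simp add: Ex_const)
qed simp

lemma Pg_sum: "Pg n (\<lambda>z. \<Sum>i\<in>I. g i z) x = (\<Sum>i\<in>I. Pg n (g i) x)"
proof (induction n arbitrary: x)
  case (Suc n)
  have "Ex x (Pg n (\<lambda>z. \<Sum>i\<in>I. g i z)) = Ex x (\<lambda>z. \<Sum>i\<in>I. Pg n (g i) z)"
    using Suc by (intro Ex_cong) auto
  then show ?case by (simp add: Ex_sum)
qed simp

lemma Pg_nonneg: "(\<And>z. 0 \<le> g z) \<Longrightarrow> 0 \<le> Pg n g x"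
  by (induction n arbitrary: x) (auto intro!: Ex_nonneg)

lemma Pg_Suc': "Pg (Suc n) g x = Pg n (\<lambda>z. Ex z g) x"
proof (induction n arbitrary: x)
  case 0
  show ?case by (auto intro!: Ex_cong)
next
  case (Suc n)
  have "Pg (Suc (Suc n)) g x = Ex x (\<lambda>z. Pg (Suc n) g z)" by (rule Pg.simps(2))
  also have "\<dots> = Ex x (\<lambda>z. Pg n (\<lambda>z. Ex z g) z)" using Suc by (intro Ex_cong) auto
  finally show ?case by simp
qed

lemma Pg_ind: "Pg n (\<lambda>z. if z = y then 1 else 0) x = pmf (nstep K n x) y"
proof (induction n arbitrary: x)
  case (Suc n)
  have "Pg (Suc n) (\<lambda>z. if z = y then 1 else 0) x = Ex x (\<lambda>z. pmf (nstep K n z) y)"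
    using Suc by (auto intro!: Ex_cong)
  then show ?case by (simp only: P_Suc)
qed (simp add: P_0)

primrec tab :: "'s set \<Rightarrow> ('s \<Rightarrow> real) \<Rightarrow> nat \<Rightarrow> 's \<Rightarrow> real" where
  "tab A g 0 x = g x"
| "tab A g (Suc n) x = Ex x (\<lambda>z. if z \<in> A then 0 else tab A g n z)"

lemma tab_Suc_mult: "tab A g (Suc n) x = Ex x (\<lambda>z. (if z \<in> A then 0 else 1) * tab A g n z)"
  by (auto intro!: Ex_cong)

lemma tab_nonneg: "(\<And>z. 0 \<le> g z) \<Longrightarrow> 0 \<le> tab A g n x"
  by (induction n arbitrary: x) (auto intro!: Ex_nonneg)

lemma tab1_le1: "tab A (\<lambda>_. 1) n x \<le> 1"
proof (induction n arbitrary: x)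
  case (Suc n)
  have "tab A (\<lambda>_. 1) (Suc n) x \<le> Ex x (\<lambda>z. 1)"
    using Suc by (auto intro!: Ex_mono)
  then show ?case by (simp add: Ex_const)
qed simp

lemma tab1_Suc_le: "tab A (\<lambda>_. 1) (Suc n) x \<le> tab A (\<lambda>_. 1) n x"
proof (induction n arbitrary: x)
  case 0
  then show ?case using tab1_le1[of A "Suc 0" x] by simp
next
  case (Suc n)
  show ?case unfolding tab.simps(2)[of A _ "Suc n"] tab.simps(2)[of A _ n]
    using Suc by (auto intro!: Ex_mono)
qed

lemma tab1_nonneg: "0 \<le> tab A (\<lambda>_. 1) n x"
  by (rule tab_nonneg) simp

lemma fpass_nonneg: "0 \<le> fpass K n x y"
  by (induction n arbitrary: x) (auto simp: Ex_expectation intro!: Ex_nonneg)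

lemma fpass_sum: "(\<Sum>k<n. fpass K k x y) + tab {y} (\<lambda>_. 1) n x = 1"
proof (induction n arbitrary: x)
  case 0
  then show ?case by simp
next
  case (Suc n)
  have "(\<Sum>k<Suc n. fpass K k x y) = fpass K 0 x y + (\<Sum>k<n. fpass K (Suc k) x y)"
    by (rule sum.lessThan_Suc_shift)
  also have "(\<Sum>k<n. fpass K (Suc k) x y) = (\<Sum>k<n. Ex x (\<lambda>z. if z = y then 0 else fpass K k z y))"
    by (simp add: Ex_expectation)
  also have "\<dots> = Ex x (\<lambda>z. \<Sum>k<n. if z = y then 0 else fpass K k z y)"
    by (simp add: Ex_sum)
  also have "\<dots> = Ex x (\<lambda>z. if z = y then 0 else 1 - tab {y} (\<lambda>_. 1) n z)"
    using Suc by (intro Ex_cong) (auto simp: algebra_simps)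
  finally have "(\<Sum>k<Suc n. fpass K k x y) + tab {y} (\<lambda>_. 1) (Suc n) x =
     Ex x (\<lambda>z. if z = y then 1 else 0) + Ex x (\<lambda>z. if z = y then 0 else 1 - tab {y} (\<lambda>_. 1) n z)
     + Ex x (\<lambda>z. if z \<in> {y} then 0 else tab {y} (\<lambda>_. 1) n z)"
    by (simp add: Ex_ind)
  also have "\<dots> = Ex x (\<lambda>z. 1)"
    unfolding Ex_add[symmetric] by (intro Ex_cong) auto
  finally show ?case by (simp add: Ex_const)
qed


definition sv :: "'s \<Rightarrow> nat \<Rightarrow> 's \<Rightarrow> real" where
  "sv y n x = tab {y} (\<lambda>_. 1) n x"

definition rv :: "'s \<Rightarrow> nat \<Rightarrow> 's \<Rightarrow> real" where
  "rv y n x = (if x = y then 0 else sv y n x)"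

lemma sv_0[simp]: "sv y 0 x = 1" by (simp add: sv_def)

lemma sv_Suc: "sv y (Suc n) x = Ex x (rv y n)"
  unfolding sv_def rv_def by (auto intro!: Ex_cong)

lemma sv_nonneg: "0 \<le> sv y n x" unfolding sv_def by (rule tab1_nonneg)
lemma sv_le1: "sv y n x \<le> 1" unfolding sv_def by (rule tab1_le1)
lemma rv_nonneg: "0 \<le> rv y n x" by (simp add: rv_def sv_nonneg)
lemma rv_le1: "rv y n x \<le> 1" by (simp add: rv_def sv_le1)

lemma P_nonneg: "0 \<le> pmf (nstep K n x) y" by simp

lemma last_exit: "(\<Sum>k\<le>n. pmf (nstep K k x) y * sv y (n - k) y) + rv y n x = 1"
proof (induction n arbitrary: x)
  case 0
  then show ?case by (simp add: P_0 rv_def)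
next
  case (Suc n)
  have "(\<Sum>k\<le>Suc n. pmf (nstep K k x) y * sv y (Suc n - k) y) =
     pmf (nstep K 0 x) y * sv y (Suc n) y + (\<Sum>k\<le>n. pmf (nstep K (Suc k) x) y * sv y (n - k) y)"
    by (subst sum.atMost_Suc_shift) simp
  also have "(\<Sum>k\<le>n. pmf (nstep K (Suc k) x) y * sv y (n - k) y) =
      (\<Sum>k\<le>n. Ex x (\<lambda>z. pmf (nstep K k z) y * sv y (n - k) y))"
    by (simp only: P_Suc Ex_cmult mult.commute[of _ "sv y _ y"])
  also have "\<dots> = Ex x (\<lambda>z. \<Sum>k\<le>n. pmf (nstep K k z) y * sv y (n - k) y)"
    by (simp add: Ex_sum)
  also have "\<dots> = Ex x (\<lambda>z. 1 - rv y n z)"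
    using Suc by (intro Ex_cong) (auto simp: algebra_simps)
  also have "\<dots> = 1 - Ex x (rv y n)"
    by (simp add: Ex_diff Ex_const)
  finally show ?case
    by (simp add: P_0 rv_def sv_Suc del: nstep.simps)
qed

lemma rv_le_P: "rv y n z \<le> 1 - pmf (nstep K n z) y"
proof -
  have "pmf (nstep K n z) y * sv y (n - n) y \<le> (\<Sum>k\<le>n. pmf (nstep K k z) y * sv y (n - k) y)"
    by (rule member_le_sum) (auto intro!: mult_nonneg_nonneg sv_nonneg)
  then show ?thesis using last_exit[where n=n and x=z and y=y] by simp
qed

lemma sv_le_P: "sv y (Suc n) x \<le> 1 - pmf (nstep K (Suc n) x) y"
proof -
  have "sv y (Suc n) x \<le> Ex x (\<lambda>z. 1 - pmf (nstep K n z) y)"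
    unfolding sv_Suc by (intro Ex_mono rv_le_P)
  then show ?thesis by (simp add: Ex_diff Ex_const P_Suc del: nstep.simps)
qed

end

locale drift_mc = fmc K for K :: "'s \<Rightarrow> 's pmf" +
  fixes V f :: "'s \<Rightarrow> real" and b :: real
  assumes V_nn: "\<And>x. 0 \<le> V x" and f_nn: "\<And>x. 0 \<le> f x"
    and drift: "\<And>x. Ex x V \<le> V x - f x + b"
    and f_fin: "\<And>L. finite {x. f x \<le> L}"
    and irr: "mc_irreducible K"
    and pred_fin: "\<And>y. finite {z. y \<in> set_pmf (K z)}"
begin

definition C :: "'s set" where "C = {x. f x < b + 1}"

lemma C_fin: "finite C"
  unfolding C_def by (rule finite_subset[OF _ f_fin[of "b+1"]]) auto

abbreviation "tt n x \<equiv> tab C (\<lambda>_. 1) n x"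
abbreviation "WW n x \<equiv> tab C V n x"

lemma WW_step: "WW (Suc (Suc n)) x \<le> WW (Suc n) x - tt (Suc n) x"
proof (induction n arbitrary: x)
  case 0
  have *: "WW (Suc 0) z \<le> V z - 1" if "z \<notin> C" for z
  proof -
    have "WW (Suc 0) z \<le> Ex z V" by (auto intro!: Ex_mono simp: V_nn)
    also have "\<dots> \<le> V z - f z + b" by (rule drift)
    finally show ?thesis using that by (auto simp: C_def)
  qed
  have "WW (Suc (Suc 0)) x \<le> Ex x (\<lambda>z. (if z \<in> C then 0 else V z) - (if z \<in> C then 0 else 1))"
    unfolding tab.simps(2)[of C V "Suc 0"] using * by (auto intro!: Ex_mono)
  also have "\<dots> = WW (Suc 0) x - tt (Suc 0) x" unfolding tab.simps by (simp add: Ex_diff)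
  finally show ?case .
next
  case (Suc n)
  have "WW (Suc (Suc (Suc n))) x \<le> Ex x (\<lambda>z. (if z \<in> C then 0 else WW (Suc n) z) - (if z \<in> C then 0 else tt (Suc n) z))"
    unfolding tab.simps(2)[of C V "Suc (Suc n)"] using Suc by (auto intro!: Ex_mono)
  also have "\<dots> = WW (Suc (Suc n)) x - tt (Suc (Suc n)) x" by (simp add: Ex_diff)
  finally show ?case .
qed

lemma tt_sum: "(\<Sum>k<n. tt (Suc k) x) \<le> WW (Suc 0) x - WW (Suc n) x"
proof (induction n)
  case (Suc n)
  then show ?case using WW_step[where n=n and x=x] by simp
qed simp

lemma tt_lim: "(\<lambda>n. tt n x) \<longlonglongrightarrow> 0"
proof -
  have "summable (\<lambda>k. tt (Suc k) x)"
  proof (rule summableI_nonneg_bounded)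
    fix n show "(\<Sum>k<n. tt (Suc k) x) \<le> WW (Suc 0) x"
      using tt_sum[where n=n and x=x] tab_nonneg[where g=V and A=C and n="Suc n" and x=x] V_nn by simp
  qed (rule tab1_nonneg)
  then have "(\<lambda>k. tt (Suc k) x) \<longlonglongrightarrow> 0" by (rule summable_LIMSEQ_zero)
  then show ?thesis by (rule LIMSEQ_imp_Suc)
qed


definition hh :: "'s \<Rightarrow> 's \<Rightarrow> real" where
  "hh y x = lim (\<lambda>n. sv y n x)"

lemma sv_lim: "(\<lambda>n. sv y n x) \<longlonglongrightarrow> hh y x" and hh_le_sv: "hh y x \<le> sv y n x"
proof -
  have "decseq (\<lambda>n. sv y n x)"
    unfolding sv_def by (rule decseq_SucI) (rule tab1_Suc_le)
  then obtain L where L: "(\<lambda>n. sv y n x) \<longlonglongrightarrow> L" "\<forall>i. L \<le> sv y i x"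
    using decseq_convergent[of "\<lambda>n. sv y n x" 0] sv_nonneg by blast
  then have "hh y x = L" unfolding hh_def using limI by blast
  then show "(\<lambda>n. sv y n x) \<longlonglongrightarrow> hh y x" "hh y x \<le> sv y n x" using L by auto
qed

lemma hh_nn: "0 \<le> hh y x"
  by (rule LIMSEQ_le_const[OF sv_lim]) (auto intro: sv_nonneg)

lemma hh_le1: "hh y x \<le> 1"
  using hh_le_sv[of y x 0] by simp

lemma Ex_lim:
  assumes "\<And>z. (\<lambda>n. F n z) \<longlonglongrightarrow> G z"
  shows "(\<lambda>n. Ex x (F n)) \<longlonglongrightarrow> Ex x G"
  unfolding Ex_def by (intro tendsto_sum tendsto_mult_left assms)

lemma hh_eq: "hh y x = Ex x (\<lambda>z. (if z = y then 0 else 1) * hh y z)"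
proof -
  have "(\<lambda>n. sv y (Suc n) x) \<longlonglongrightarrow> hh y x" by (rule LIMSEQ_Suc[OF sv_lim])
  moreover have "sv y (Suc n) x = Ex x (\<lambda>z. (if z = y then 0 else 1) * sv y n z)" for n
    unfolding sv_def tab_Suc_mult by simp
  moreover have "(\<lambda>n. Ex x (\<lambda>z. (if z = y then 0 else 1) * sv y n z)) \<longlonglongrightarrow>
     Ex x (\<lambda>z. (if z = y then 0 else 1) * hh y z)"
    by (intro Ex_lim tendsto_mult_left sv_lim)
  ultimately show ?thesis using LIMSEQ_unique by auto
qed

lemma hh_le_Ex: "hh y x \<le> Ex x (hh y)"
  by (subst hh_eq) (auto intro!: Ex_mono simp: hh_nn)

definition HC :: "'s \<Rightarrow> real" where
  "HC y = (if C = {} then 0 else Max (hh y ` C))"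

lemma HC_ge: "z \<in> C \<Longrightarrow> hh y z \<le> HC y"
  unfolding HC_def using C_fin by auto

lemma HC_nn: "0 \<le> HC y"
  unfolding HC_def using C_fin hh_nn by (auto simp: Max_ge_iff)

lemma hh_le_A: "hh y x \<le> HC y * (1 - tt n x) + tt n x"
proof (induction n arbitrary: x)
  case 0
  then show ?case using hh_le1 by simp
next
  case (Suc n)
  have "hh y x \<le> Ex x (hh y)" by (rule hh_le_Ex)
  also have "\<dots> \<le> Ex x (\<lambda>z. HC y - HC y * ((if z \<in> C then 0 else 1) * tt n z)
        + (if z \<in> C then 0 else 1) * tt n z)"
    using Suc HC_ge by (intro Ex_mono) (auto simp: algebra_simps)
  also have "\<dots> = HC y * (1 - tt (Suc n) x) + tt (Suc n) x"
    by (simp only: Ex_add Ex_diff Ex_cmult Ex_const tab_Suc_mult[symmetric]) (simp add: algebra_simps)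
  finally show ?case .
qed

lemma hh_le_HC: "hh y x \<le> HC y"
proof -
  have "(\<lambda>n. HC y * (1 - tt n x) + tt n x) \<longlonglongrightarrow> HC y * (1 - 0) + 0"
    by (intro tendsto_intros tt_lim)
  then show ?thesis
    by (intro LIMSEQ_le_const[of "\<lambda>n. HC y * (1 - tt n x) + tt n x"]) (auto intro: hh_le_A)
qed

lemma hh_le_C: "hh y x \<le> HC y * sv y n x"
proof (induction n arbitrary: x)
  case 0
  then show ?case using hh_le_HC by simp
next
  case (Suc n)
  have "hh y x = Ex x (\<lambda>z. (if z = y then 0 else 1) * hh y z)" by (rule hh_eq)
  also have "\<dots> \<le> Ex x (\<lambda>z. HC y * ((if z = y then 0 else 1) * sv y n z))"
    using Suc by (intro Ex_mono) auto
  also have "\<dots> = HC y * sv y (Suc n) x"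
    by (simp only: Ex_cmult sv_def tab_Suc_mult) simp
  finally show ?case .
qed

lemma P_pos_Suc: "\<exists>n. 0 < pmf (nstep K (Suc n) x) y"
proof -
  obtain z where z: "z \<in> set_pmf (K x)" using set_pmf_not_empty[of "K x"] by blast
  obtain m where m: "0 < pmf (nstep K m z) y" using irr unfolding mc_irreducible_def by blast
  have "0 < pmf (K x) z * pmf (nstep K m z) y" using z m by (simp add: set_pmf_iff)
  also have "\<dots> \<le> pmf (nstep K (Suc m) x) y"
    unfolding P_Suc by (rule Ex_ge_term[OF _ z]) simp
  finally show ?thesis by blast
qed

lemma HC_zero: "HC y = 0"
proof (cases "C = {}")
  case True then show ?thesis by (simp add: HC_def)
next
  case False
  then have "HC y \<in> hh y ` C" unfolding HC_def using C_fin by (auto intro!: Max_in)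
  then obtain z0 where z0: "z0 \<in> C" "hh y z0 = HC y" by auto
  obtain n where n: "0 < pmf (nstep K (Suc n) z0) y" using P_pos_Suc by blast
  have "HC y \<le> HC y * sv y (Suc n) z0" using hh_le_C[of y z0 "Suc n"] z0 by simp
  also have "\<dots> \<le> HC y * (1 - pmf (nstep K (Suc n) z0) y)"
    by (intro mult_left_mono sv_le_P HC_nn)
  finally have "HC y * pmf (nstep K (Suc n) z0) y \<le> 0" by (simp add: algebra_simps)
  then show ?thesis using n HC_nn[of y] by (simp add: mult_le_0_iff antisym)
qed

lemma sv_to_0: "(\<lambda>n. sv y n x) \<longlonglongrightarrow> 0"
proof -
  have "hh y x = 0" using hh_le_HC[of y x] HC_zero[of y] hh_nn[of y x] by simp
  then show ?thesis using sv_lim[of y x] by simp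
qed

lemma hit_prob_1: "hit_prob K x y = 1"
proof -
  have "(\<lambda>n. 1 - sv y n x) \<longlonglongrightarrow> 1 - 0" by (intro tendsto_intros sv_to_0)
  moreover have "(\<Sum>k<n. fpass K k x y) = 1 - sv y n x" for n
    using fpass_sum[where n=n and x=x and y=y] by (simp add: sv_def algebra_simps)
  ultimately have "(\<lambda>k. fpass K k x y) sums 1" unfolding sums_def by simp
  then show ?thesis unfolding hit_prob_def by (rule sums_unique[symmetric])
qed


lemma dsum: "(\<Sum>n<N. \<Sum>k\<le>n. a k * c (n - k)) = (\<Sum>k<N. a k * (\<Sum>j<N - k. c j))"
  for a c :: "nat \<Rightarrow> real"
proof (induction N)
  case 0
  then show ?case by simp
next
  case (Suc N)
  have "(\<Sum>k<Suc N. a k * (\<Sum>j<Suc N - k. c j)) =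
        (\<Sum>k<Suc N. a k * (\<Sum>j<N - k. c j) + a k * c (N - k))"
    by (rule sum.cong) (auto simp: Suc_diff_le distrib_left)
  also have "\<dots> = (\<Sum>k<Suc N. a k * (\<Sum>j<N - k. c j)) + (\<Sum>k<Suc N. a k * c (N - k))"
    by (rule sum.distrib)
  also have "(\<Sum>k<Suc N. a k * (\<Sum>j<N - k. c j)) = (\<Sum>k<N. a k * (\<Sum>j<N - k. c j))"
    by simp
  also have "(\<Sum>k<Suc N. a k * c (N - k)) = (\<Sum>k\<le>N. a k * c (N - k))"
    by (simp only: lessThan_Suc_atMost)
  finally show ?case using Suc by simp
qed

lemma cesaro0:
  fixes a :: "nat \<Rightarrow> real"
  assumes lim: "a \<longlonglongrightarrow> 0" and nn: "\<And>n. 0 \<le> a n"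
  shows "(\<lambda>N. (\<Sum>n<N. a n) / real N) \<longlonglongrightarrow> 0"
proof (rule order_tendstoI)
  fix e :: real assume "e < 0"
  then show "\<forall>\<^sub>F N in sequentially. e < (\<Sum>n<N. a n) / real N"
    by (intro always_eventually allI, rule less_le_trans[OF _ divide_nonneg_nonneg])
       (auto intro: sum_nonneg nn)
next
  fix e :: real assume e: "0 < e"
  then have "\<forall>\<^sub>F n in sequentially. a n < e / 2" using lim by (intro order_tendstoD) auto
  then obtain N0 where N0: "\<And>n. n \<ge> N0 \<Longrightarrow> a n < e / 2" by (auto simp: eventually_sequentially)
  define S0 where "S0 = (\<Sum>n<N0. a n)"
  have S0nn: "0 \<le> S0" unfolding S0_def by (intro sum_nonneg nn)
  have "(\<lambda>N. S0 / real N) \<longlonglongrightarrow> 0" by (rule tendsto_divide_0[OF tendsto_const]) (rule filterlim_at_top_imp_at_infinity[OF filterlim_real_sequentially])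
  then have ev1: "\<forall>\<^sub>F N in sequentially. S0 / real N < e / 2" using e by (intro order_tendstoD) auto
  have ev2: "\<forall>\<^sub>F N in sequentially. N0 \<le> N \<and> 0 < N" by (auto simp: eventually_sequentially intro: exI[of _ "Suc N0"])
  show "\<forall>\<^sub>F N in sequentially. (\<Sum>n<N. a n) / real N < e"
    using ev1 ev2
  proof eventually_elim
    case (elim N)
    then have NN: "N0 \<le> N" "0 < N" by auto
    have "(\<Sum>n<N. a n) = S0 + (\<Sum>n\<in>{N0..<N}. a n)"
      unfolding S0_def using NN by (simp add: lessThan_atLeast0 sum.atLeastLessThan_concat)
    also have "(\<Sum>n\<in>{N0..<N}. a n) \<le> of_nat (card {N0..<N}) * (e / 2)"
      by (rule sum_bounded_above) (meson N0 atLeastLessThan_iff less_imp_le)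
    also have "\<dots> \<le> real N * (e / 2)" using e by (intro mult_right_mono) auto
    finally have "(\<Sum>n<N. a n) / real N \<le> (S0 + real N * (e / 2)) / real N"
      using NN by (intro divide_right_mono) auto
    also have "\<dots> = S0 / real N + e / 2" using NN by (simp add: field_simps)
    also have "\<dots> < e" using elim(1) by linarith
    finally show ?case .
  qed
qed

definition MM :: "'s \<Rightarrow> nat \<Rightarrow> real" where
  "MM y m = (\<Sum>j<m. sv y j y)"

lemma MM_mono: "m \<le> m' \<Longrightarrow> MM y m \<le> MM y m'"
  unfolding MM_def by (rule sum_mono2) (auto intro: sv_nonneg)

lemma MM_ge1: "1 \<le> MM y (Suc m)"
  using MM_mono[of 1 "Suc m" y] by (simp add: MM_def)

definition pp :: "'s \<Rightarrow> real" where
  "pp y = lim (\<lambda>m. 1 / MM y (Suc m))"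

lemma pp_lim: "(\<lambda>m. 1 / MM y (Suc m)) \<longlonglongrightarrow> pp y" and pp_le: "pp y \<le> 1 / MM y (Suc m)"
proof -
  have "decseq (\<lambda>m. 1 / MM y (Suc m))"
  proof (rule decseq_SucI)
    fix m
    show "1 / MM y (Suc (Suc m)) \<le> 1 / MM y (Suc m)"
      using MM_ge1[of y m] MM_mono[of "Suc m" "Suc (Suc m)" y] by (intro divide_left_mono) auto
  qed
  moreover have "\<forall>i. 0 \<le> 1 / MM y (Suc i)"
  proof
    fix i show "0 \<le> 1 / MM y (Suc i)" using MM_ge1[of y i] by simp
  qed
  ultimately obtain L where L: "(\<lambda>m. 1 / MM y (Suc m)) \<longlonglongrightarrow> L" "\<forall>i. L \<le> 1 / MM y (Suc i)"
    using decseq_convergent[of "\<lambda>m. 1 / MM y (Suc m)" 0] by blast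
  then have "pp y = L" unfolding pp_def using limI by blast
  then show "(\<lambda>m. 1 / MM y (Suc m)) \<longlonglongrightarrow> pp y" "pp y \<le> 1 / MM y (Suc m)" using L by auto
qed

lemma pp_nn: "0 \<le> pp y"
proof -
  have "0 \<le> 1 / MM y (Suc n)" for n using MM_ge1[of y n] by simp
  then show ?thesis by (intro LIMSEQ_le_const[OF pp_lim]) auto
qed

lemma pp_le1: "pp y \<le> 1"
  using pp_le[of y 0] by (simp add: MM_def)

abbreviation "VN x y N \<equiv> (\<Sum>k<N. pmf (nstep K k x) y)"

lemma key_id: "(\<Sum>k<N. pmf (nstep K k x) y * MM y (N - k)) = real N - (\<Sum>n<N. rv y n x)"
proof -
  have "(\<Sum>k<N. pmf (nstep K k x) y * MM y (N - k)) =
        (\<Sum>n<N. \<Sum>k\<le>n. pmf (nstep K k x) y * sv y (n - k) y)"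
    unfolding MM_def by (rule dsum[symmetric])
  also have "\<dots> = (\<Sum>n<N. 1 - rv y n x)"
    using last_exit by (intro sum.cong) (auto simp: algebra_simps)
  finally show ?thesis by (simp add: sum_subtractf)
qed

lemma L1: "real N - (\<Sum>n<N. rv y n x) \<le> MM y N * VN x y N"
proof -
  have "(\<Sum>k<N. pmf (nstep K k x) y * MM y (N - k)) \<le> (\<Sum>k<N. pmf (nstep K k x) y * MM y N)"
    by (intro sum_mono mult_left_mono MM_mono) auto
  then show ?thesis unfolding key_id by (simp add: sum_distrib_left mult.commute)
qed

lemma U1: "m \<le> N \<Longrightarrow> MM y m * VN x y (N - m) \<le> real N"
proof -
  assume mN: "m \<le> N"
  have "MM y m * VN x y (N - m) = (\<Sum>k<N - m. pmf (nstep K k x) y * MM y m)"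
    by (simp add: sum_distrib_left mult.commute)
  also have "\<dots> \<le> (\<Sum>k<N - m. pmf (nstep K k x) y * MM y (N - k))"
    by (intro sum_mono mult_left_mono MM_mono) auto
  also have "\<dots> \<le> (\<Sum>k<N. pmf (nstep K k x) y * MM y (N - k))"
    by (rule sum_mono2) (auto intro!: mult_nonneg_nonneg simp: MM_def sv_nonneg sum_nonneg)
  also have "\<dots> \<le> real N" unfolding key_id by (simp add: sum_nonneg rv_nonneg)
  finally show ?thesis .
qed

lemma U2: "m \<le> N \<Longrightarrow> VN x y N \<le> VN x y (N - m) + real m"
proof -
  assume mN: "m \<le> N"
  have "VN x y N = VN x y (N - m) + (\<Sum>k\<in>{N-m..<N}. pmf (nstep K k x) y)"
    using mN by (simp add: lessThan_atLeast0 sum.atLeastLessThan_concat)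
  also have "(\<Sum>k\<in>{N-m..<N}. pmf (nstep K k x) y) \<le> of_nat (card {N-m..<N}) * 1"
    by (rule sum_bounded_above) (simp add: pmf_le_1)
  finally show ?thesis using mN by simp
qed

lemma cesaro: "(\<lambda>N. VN x y N / real N) \<longlonglongrightarrow> pp y"
proof (rule order_tendstoI)
  fix a assume a: "a < pp y"
  have R0: "(\<lambda>N. (\<Sum>n<N. rv y n x) / real N) \<longlonglongrightarrow> 0"
  proof (rule cesaro0)
    show "(\<lambda>n. rv y n x) \<longlonglongrightarrow> 0"
      by (rule tendsto_sandwich[of "\<lambda>_. 0" _ _ "\<lambda>n. sv y n x"])
         (auto simp: rv_def sv_nonneg intro: sv_to_0)
  qed (rule rv_nonneg)
  have "(\<lambda>N. pp y - (\<Sum>n<N. rv y n x) / real N) \<longlonglongrightarrow> pp y - 0"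
    by (intro tendsto_intros R0)
  then have "\<forall>\<^sub>F N in sequentially. a < pp y - (\<Sum>n<N. rv y n x) / real N"
    using a by (intro order_tendstoD) auto
  moreover have "\<forall>\<^sub>F N in sequentially. 0 < N" by (auto simp: eventually_sequentially intro: exI[of _ 1])
  ultimately show "\<forall>\<^sub>F N in sequentially. a < VN x y N / real N"
  proof eventually_elim
    case (elim N)
    define R where "R = (\<Sum>n<N. rv y n x)"
    have Rle: "R \<le> real N" unfolding R_def using sum_bounded_above[of "{..<N}" "\<lambda>n. rv y n x" 1] rv_le1 by simp
    have Rnn: "0 \<le> R" unfolding R_def by (intro sum_nonneg rv_nonneg)
    obtain N' where N': "N = Suc N'" using elim by (cases N) auto
    have M1: "1 \<le> MM y N" using MM_ge1 N' by simp
    have Rn: "R / real N \<le> 1" using Rle elim by (simp add: divide_le_eq_1)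
    have Rn0: "0 \<le> R / real N" using Rnn by simp
    have s1: "pp y * (R / real N) \<le> R / real N" by (rule mult_left_le_one_le[OF Rn0 pp_nn pp_le1])
    have ppM: "pp y \<le> 1 / MM y N" using pp_le[of y N'] N' by simp
    have "pp y - R / real N \<le> pp y * (1 - R / real N)" using s1 by (simp add: algebra_simps)
    also have "\<dots> \<le> (1 / MM y N) * (1 - R / real N)"
      by (rule mult_right_mono[OF ppM]) (use Rn in simp)
    also have "\<dots> = (real N - R) / (real N * MM y N)" using elim M1 by (simp add: field_simps)
    also have "\<dots> \<le> (MM y N * VN x y N) / (real N * MM y N)"
    proof (rule divide_right_mono)
      show "real N - R \<le> MM y N * VN x y N" using L1[of N y x] unfolding R_def .
      show "0 \<le> real N * MM y N" using M1 by simp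
    qed
    also have "\<dots> = VN x y N / real N" using M1 by simp
    finally show ?case using elim R_def by simp
  qed
next
  fix a assume a: "pp y < a"
  have "\<forall>\<^sub>F m in sequentially. 1 / MM y (Suc m) < (pp y + a) / 2"
    using a by (intro order_tendstoD[OF pp_lim]) auto
  then obtain m0 where m0: "1 / MM y (Suc m0) < (pp y + a) / 2" by (auto simp: eventually_sequentially)
  define m where "m = Suc m0"
  have "(\<lambda>N. 1 / MM y m + real m / real N) \<longlonglongrightarrow> 1 / MM y m + 0"
    by (intro tendsto_intros tendsto_divide_0[OF tendsto_const] filterlim_at_top_imp_at_infinity[OF filterlim_real_sequentially])
  then have "\<forall>\<^sub>F N in sequentially. 1 / MM y m + real m / real N < a"
    by (rule order_tendstoD(2)) (use a m0 in \<open>simp add: m_def\<close>)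
  moreover have "\<forall>\<^sub>F N in sequentially. m \<le> N \<and> 0 < N" by (auto simp: eventually_sequentially m_def intro: exI[of _ "Suc m0"])
  ultimately show "\<forall>\<^sub>F N in sequentially. VN x y N / real N < a"
  proof eventually_elim
    case (elim N)
    have M1: "1 \<le> MM y m" using MM_ge1 by (simp add: m_def)
    have "VN x y (N - m) \<le> real N / MM y m"
      using U1[of m N y x] elim M1 by (simp add: field_simps)
    then have "VN x y N \<le> real N / MM y m + real m" using U2[of m N x y] elim by simp
    then have "VN x y N / real N \<le> (real N / MM y m + real m) / real N"
      using elim by (intro divide_right_mono) auto
    also have "\<dots> = 1 / MM y m + real m / real N" using elim by (simp add: field_simps)
    finally show ?case using elim by simp
  qed
qed


lemma Pg_V_step: "Pg (Suc n) V x \<le> Pg n V x - Pg n f x + b"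
proof -
  have "Pg (Suc n) V x = Pg n (\<lambda>z. Ex z V) x" by (rule Pg_Suc')
  also have "\<dots> \<le> Pg n (\<lambda>z. V z - f z + b) x" by (intro Pg_mono drift)
  also have "\<dots> = Pg n V x - Pg n f x + b" by (simp add: Pg_add Pg_diff Pg_const)
  finally show ?thesis .
qed

lemma Pg_f_sum: "(\<Sum>k<N. Pg k f x) \<le> V x + real N * b"
proof -
  have "(\<Sum>k<N. Pg k f x) \<le> V x - Pg N V x + real N * b" for N
  proof (induction N)
    case (Suc N)
    then show ?case using Pg_V_step[of N x] by (simp add: algebra_simps)
  qed simp
  moreover have "0 \<le> Pg N V x" by (intro Pg_nonneg V_nn)
  ultimately show ?thesis by (smt (verit))
qed

lemma sumF_Pg: "finite F \<Longrightarrow> (\<Sum>y\<in>F. pmf (nstep K k x) y) = Pg k (\<lambda>z. if z \<in> F then 1 else 0) x"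
proof -
  assume F: "finite F"
  have "(\<Sum>y\<in>F. pmf (nstep K k x) y) = (\<Sum>y\<in>F. Pg k (\<lambda>z. if z = y then 1 else 0) x)"
    by (simp add: Pg_ind)
  also have "\<dots> = Pg k (\<lambda>z. \<Sum>y\<in>F. if z = y then 1 else 0) x" by (simp add: Pg_sum)
  also have "\<dots> = Pg k (\<lambda>z. if z \<in> F then 1 else 0) x" using F by (simp add: sum.delta')
  finally show ?thesis .
qed

lemma sumF_le1: "finite F \<Longrightarrow> (\<Sum>y\<in>F. pmf (nstep K k x) y) \<le> 1"
  using Pg_mono[of "\<lambda>z. if z \<in> F then 1 else 0" "\<lambda>_. 1" k x] by (simp add: sumF_Pg Pg_const)

lemma sumF_tight: "0 < L \<Longrightarrow> 1 - (\<Sum>y\<in>{z. f z \<le> L}. pmf (nstep K k x) y) \<le> Pg k f x / L"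
proof -
  assume L: "0 < L"
  have "1 - (\<Sum>y\<in>{z. f z \<le> L}. pmf (nstep K k x) y) = Pg k (\<lambda>z. 1 - (if z \<in> {z. f z \<le> L} then 1 else 0)) x"
    by (simp add: sumF_Pg f_fin Pg_diff Pg_const)
  also have "\<dots> \<le> Pg k (\<lambda>z. (1 / L) * f z) x"
    using L f_nn by (intro Pg_mono) (auto simp: field_simps)
  also have "\<dots> = Pg k f x / L" by (simp only: Pg_cmult) simp
  finally show ?thesis .
qed

definition x0 :: 's where "x0 = undefined"

lemma pp_sum_le1: "finite F \<Longrightarrow> (\<Sum>y\<in>F. pp y) \<le> 1"
proof -
  assume F: "finite F"
  have "(\<lambda>N. \<Sum>y\<in>F. VN x0 y N / real N) \<longlonglongrightarrow> (\<Sum>y\<in>F. pp y)"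
    by (intro tendsto_sum cesaro)
  moreover have "(\<Sum>y\<in>F. VN x0 y N / real N) \<le> 1" for N
  proof (cases "N = 0")
    case False
    have "(\<Sum>y\<in>F. VN x0 y N / real N) = (\<Sum>k<N. \<Sum>y\<in>F. pmf (nstep K k x0) y) / real N"
      by (simp add: sum_divide_distrib[symmetric] sum.swap[of _ F])
    also have "\<dots> \<le> real N / real N"
      using sum_bounded_above[of "{..<N}" "\<lambda>k. \<Sum>y\<in>F. pmf (nstep K k x0) y" 1] sumF_le1[OF F] False
      by (intro divide_right_mono) auto
    finally show ?thesis using False by simp
  qed simp
  ultimately show ?thesis by (intro LIMSEQ_le_const2) auto
qed

lemma pp_sum_ge: "0 < L \<Longrightarrow> 1 - b / L \<le> (\<Sum>y\<in>{z. f z \<le> L}. pp y)"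
proof -
  assume L: "0 < L"
  define F where "F = {z. f z \<le> L}"
  have F: "finite F" unfolding F_def by (rule f_fin)
  have "(\<lambda>N. \<Sum>y\<in>F. VN x0 y N / real N) \<longlonglongrightarrow> (\<Sum>y\<in>F. pp y)"
    by (intro tendsto_sum cesaro)
  moreover have "(\<lambda>N. 1 - (V x0 / real N + b) / L) \<longlonglongrightarrow> 1 - (0 + b) / L"
    by (intro tendsto_intros tendsto_divide_0[OF tendsto_const]
        filterlim_at_top_imp_at_infinity[OF filterlim_real_sequentially]) (use L in auto)
  moreover have "1 - (V x0 / real N + b) / L \<le> (\<Sum>y\<in>F. VN x0 y N / real N)" if N: "N \<ge> 1" for N
  proof -
    have e0: "(\<Sum>y\<in>F. VN x0 y N / real N) = (\<Sum>k<N. \<Sum>y\<in>F. pmf (nstep K k x0) y) / real N"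
      by (simp add: sum_divide_distrib[symmetric] sum.swap[of _ F])
    have a1: "(\<Sum>k<N. \<Sum>y\<in>F. pmf (nstep K k x0) y) \<ge> (\<Sum>k<N. 1 - Pg k f x0 / L)"
      using sumF_tight[OF L] unfolding F_def by (intro sum_mono) (smt (verit))
    have a2: "(\<Sum>k<N. 1 - Pg k f x0 / L) = real N - (\<Sum>k<N. Pg k f x0) / L"
      by (simp add: sum_subtractf sum_divide_distrib)
    have a3: "(\<Sum>k<N. Pg k f x0) / L \<le> (V x0 + real N * b) / L"
      using Pg_f_sum[where N=N and x=x0] L by (simp add: divide_right_mono)
    have "real N - (V x0 + real N * b) / L \<le> (\<Sum>y\<in>F. VN x0 y N / real N) * real N"
    proof -
      have e1: "(\<Sum>y\<in>F. VN x0 y N / real N) * real N = (\<Sum>k<N. \<Sum>y\<in>F. pmf (nstep K k x0) y)"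
        using e0 N by simp
      show ?thesis using a1 a2 a3 e1 by linarith
    qed
    then show ?thesis using N L by (simp add: field_simps)
  qed
  ultimately show ?thesis unfolding F_def
    by (intro LIMSEQ_le[of "\<lambda>N. 1 - (V x0 / real N + b) / L" _ "\<lambda>N. \<Sum>y\<in>F. VN x0 y N / real N"])
       (auto simp: F_def)
qed


lemma pp_nn_integral: "(\<integral>\<^sup>+y. ennreal (pp y) \<partial>count_space UNIV) = 1"
proof -
  have summ: "Infinite_Set_Sum.abs_summable_on pp UNIV"
    by (rule abs_summable_finite_sumsI[where B=1]) (simp add: pp_nn pp_sum_le1)
  have I: "(\<integral>\<^sup>+y. ennreal (pp y) \<partial>count_space UNIV) = ennreal (infsetsum pp UNIV)"
    by (rule nn_integral_conv_infsetsum[OF summ]) (simp add: pp_nn)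
  have S: "ennreal (infsetsum pp UNIV) = (SUP F\<in>{F. finite F \<and> F \<subseteq> UNIV}. ennreal (sum pp F))"
    by (rule infsetsum_nonneg_is_SUPREMUM_ennreal[OF summ]) (simp add: pp_nn)
  have "ennreal (infsetsum pp UNIV) \<le> 1"
    unfolding S by (rule SUP_least) (auto simp: pp_sum_le1)
  then have le: "infsetsum pp UNIV \<le> 1" by (simp add: ennreal_le_1)
  have ge_F: "sum pp F \<le> infsetsum pp UNIV" if "finite F" for F
  proof -
    have "ennreal (sum pp F) \<le> ennreal (infsetsum pp UNIV)"
      unfolding S by (rule SUP_upper) (use that in auto)
    moreover have "0 \<le> infsetsum pp UNIV" by (rule infsetsum_nonneg) (simp add: pp_nn)
    ultimately show ?thesis by (simp add: ennreal_le_iff)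
  qed
  have ge: "1 \<le> infsetsum pp UNIV"
  proof (rule field_le_epsilon)
    fix e :: real assume e: "0 < e"
    define L where "L = (\<bar>b\<bar> + 1) / e"
    have L: "0 < L" using e by (simp add: L_def)
    have "b / L \<le> e"
    proof -
      have "b / L = b * e / (\<bar>b\<bar> + 1)" using e by (simp add: L_def)
      also have "\<dots> \<le> e"
        using e by (simp add: divide_le_eq) (smt (verit, best) mult_right_mono)
      finally show ?thesis .
    qed
    then have "1 \<le> (\<Sum>y\<in>{z. f z \<le> L}. pp y) + e" using pp_sum_ge[OF L] by linarith
    then show "1 \<le> infsetsum pp UNIV + e" using ge_F[OF f_fin[of L]] by linarith
  qed
  show ?thesis using I le ge by simp
qed

definition ppmf :: "'s pmf" where "ppmf = embed_pmf pp"

lemma pmf_ppmf: "pmf ppmf y = pp y"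
  unfolding ppmf_def by (rule pmf_embed_pmf) (simp_all add: pp_nn pp_nn_integral)

abbreviation "Pr y \<equiv> {z. y \<in> set_pmf (K z)}"

lemma pmf_bind_fin: "pmf (p \<bind> K) y = (\<Sum>z\<in>Pr y. pmf (K z) y * pmf p z)"
  unfolding pmf_bind by (rule integral_measure_pmf_real[OF pred_fin]) (auto simp: set_pmf_iff)

lemma P_Suc_back: "pmf (nstep K (Suc k) x) y = (\<Sum>z\<in>Pr y. pmf (K z) y * pmf (nstep K k x) z)"
  by (simp only: nstep.simps(2) pmf_bind_fin)

lemma ppmf_stationary: "mc_stationary K ppmf"
proof -
  have "pmf (ppmf \<bind> K) y = pmf ppmf y" for y
  proof -
    have lim1: "(\<lambda>N. \<Sum>z\<in>Pr y. pmf (K z) y * (VN x0 z N / real N)) \<longlonglongrightarrow> (\<Sum>z\<in>Pr y. pmf (K z) y * pp z)"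
      by (intro tendsto_sum tendsto_mult_left cesaro)
    have eq: "(\<Sum>z\<in>Pr y. pmf (K z) y * (VN x0 z N / real N)) =
        (VN x0 y (Suc N) - pmf (nstep K 0 x0) y) / real N" for N
    proof -
      have "(\<Sum>z\<in>Pr y. pmf (K z) y * (VN x0 z N / real N)) =
            (\<Sum>k<N. \<Sum>z\<in>Pr y. pmf (K z) y * pmf (nstep K k x0) z) / real N"
        by (simp add: sum_divide_distrib[symmetric] sum_distrib_left sum.swap[of _ "Pr y"])
      also have "\<dots> = (\<Sum>k<N. pmf (nstep K (Suc k) x0) y) / real N"
        by (simp only: P_Suc_back)
      also have "(\<Sum>k<N. pmf (nstep K (Suc k) x0) y) = VN x0 y (Suc N) - pmf (nstep K 0 x0) y"
        by (simp only: sum.lessThan_Suc_shift)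
      finally show ?thesis .
    qed
    have "(\<lambda>N. (VN x0 y (Suc N) - pmf (nstep K 0 x0) y) / real N) \<longlonglongrightarrow> pp y"
    proof -
      have a: "(\<lambda>N. VN x0 y (Suc N) / real (Suc N)) \<longlonglongrightarrow> pp y" by (rule LIMSEQ_Suc[OF cesaro])
      have b: "(\<lambda>N. real (Suc N) / real N) \<longlonglongrightarrow> 1" by (rule LIMSEQ_Suc_n_over_n)
      have c: "(\<lambda>N. pmf (nstep K 0 x0) y / real N) \<longlonglongrightarrow> 0"
        by (intro tendsto_divide_0[OF tendsto_const] filterlim_at_top_imp_at_infinity[OF filterlim_real_sequentially])
      have "(\<lambda>N. VN x0 y (Suc N) / real (Suc N) * (real (Suc N) / real N) - pmf (nstep K 0 x0) y / real N)
             \<longlonglongrightarrow> pp y * 1 - 0"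
        by (intro tendsto_intros a b c)
      moreover have "eventually (\<lambda>N. VN x0 y (Suc N) / real (Suc N) * (real (Suc N) / real N) - pmf (nstep K 0 x0) y / real N
          = (VN x0 y (Suc N) - pmf (nstep K 0 x0) y) / real N) sequentially"
        by (auto simp: eventually_sequentially diff_divide_distrib intro!: exI[of _ 1])
      ultimately show ?thesis by (auto dest: tendsto_cong[THEN iffD1, rotated])
    qed
    then have "(\<lambda>N. \<Sum>z\<in>Pr y. pmf (K z) y * (VN x0 z N / real N)) \<longlonglongrightarrow> pp y" by (simp only: eq)
    with lim1 have "(\<Sum>z\<in>Pr y. pmf (K z) y * pp z) = pp y" by (rule LIMSEQ_unique)
    then show ?thesis by (simp add: pmf_bind_fin pmf_ppmf)
  qed
  then show ?thesis unfolding mc_stationary_def by (intro pmf_eqI) auto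
qed


lemma stat_iter: "q \<bind> K = q \<Longrightarrow> q \<bind> nstep K k = q"
proof (induction k)
  case 0
  then show ?case by (simp add: bind_return_pmf')
next
  case (Suc k)
  have "nstep K (Suc k) = (\<lambda>x. nstep K k x \<bind> K)" by (rule ext) simp
  then have "q \<bind> nstep K (Suc k) = q \<bind> (\<lambda>x. nstep K k x \<bind> K)" by simp
  also have "\<dots> = (q \<bind> nstep K k) \<bind> K" by (simp only: bind_assoc_pmf)
  also have "\<dots> = q" using Suc by simp
  finally show ?case .
qed

lemma unique_stat: "mc_stationary K q \<Longrightarrow> q = ppmf"
proof -
  assume st: "mc_stationary K q"
  have "pmf q y = pp y" for y
  proof -
    define s where "s N x = VN x y (Suc N) / real (Suc N)" for N x
    have int1: "integrable (measure_pmf q) (\<lambda>x. pmf (nstep K k x) y)" for k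
      by (rule measure_pmf.integrable_const_bound[where B=1]) (auto simp: pmf_le_1)
    have E: "integral\<^sup>L (measure_pmf q) (\<lambda>x. pmf (nstep K k x) y) = pmf q y" for k
    proof -
      have "q \<bind> nstep K k = q" by (rule stat_iter) (use st in \<open>simp add: mc_stationary_def\<close>)
      then have "pmf q y = pmf (q \<bind> nstep K k) y" by simp
      also have "\<dots> = integral\<^sup>L (measure_pmf q) (\<lambda>x. pmf (nstep K k x) y)" by (rule pmf_bind)
      finally show ?thesis by simp
    qed
    have "integral\<^sup>L (measure_pmf q) (s N) = pmf q y" for N
    proof -
      have "integral\<^sup>L (measure_pmf q) (s N) = (\<Sum>k<Suc N. integral\<^sup>L (measure_pmf q) (\<lambda>x. pmf (nstep K k x) y)) / real (Suc N)"
        unfolding s_def integral_divide_zero by (subst Bochner_Integration.integral_sum[OF int1]) auto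
      then show ?thesis by (simp add: E)
    qed
    moreover have "(\<lambda>N. integral\<^sup>L (measure_pmf q) (s N)) \<longlonglongrightarrow> integral\<^sup>L (measure_pmf q) (\<lambda>_. pp y)"
    proof (rule integral_dominated_convergence[where w="\<lambda>_. 1"])
      show "AE x in measure_pmf q. (\<lambda>N. s N x) \<longlonglongrightarrow> pp y"
        unfolding s_def by (intro AE_I2 LIMSEQ_Suc[OF cesaro])
      show "AE x in measure_pmf q. norm (s N x) \<le> 1" for N
      proof (intro AE_I2)
        fix x
        have "VN x y (Suc N) \<le> real (Suc N)"
          using sum_bounded_above[of "{..<Suc N}" "\<lambda>k. pmf (nstep K k x) y" 1] by (simp add: pmf_le_1)
        then show "norm (s N x) \<le> 1" unfolding s_def by (simp add: sum_nonneg)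
      qed
    qed auto
    ultimately show ?thesis by (simp add: LIMSEQ_const_iff)
  qed
  then show ?thesis by (intro pmf_eqI) (simp add: pmf_ppmf)
qed

theorem drift_main: "mc_ergodic K \<and> mc_positive_harris K"
proof
  show "mc_ergodic K"
    unfolding mc_ergodic_def
  proof (intro exI[of _ ppmf] conjI allI impI)
    show "mc_stationary K ppmf" by (rule ppmf_stationary)
    fix q assume "mc_stationary K q" then show "q = ppmf" by (rule unique_stat)
  next
    fix x y show "(\<lambda>n. (\<Sum>k<n. pmf (nstep K k x) y) / real n) \<longlonglongrightarrow> pmf ppmf y"
      unfolding pmf_ppmf by (rule cesaro)
  qed
  show "mc_positive_harris K"
    unfolding mc_positive_harris_def mc_harris_recurrent_def
    using irr hit_prob_1 ppmf_stationary by blast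
qed

end



lemma softmax_bound:
  fixes c :: "'n::finite \<Rightarrow> real" and \<iota> :: real
  assumes io: "0 < \<iota>"
  shows "(\<Sum>a\<in>UNIV. exp (- c a / \<iota>) / (\<Sum>b\<in>UNIV. exp (- c b / \<iota>)) * c a) \<le> c j + real CARD('n) * \<iota>"
proof -
  define Z where "Z = (\<Sum>b\<in>UNIV. exp (- c b / \<iota>))"
  define p where "p a = exp (- c a / \<iota>) / Z" for a
  have Zpos: "0 < Z" unfolding Z_def by (intro sum_pos) auto
  have Zge: "exp (- c j / \<iota>) \<le> Z" unfolding Z_def by (rule member_le_sum) auto
  have s1: "(\<Sum>a\<in>UNIV. p a) = 1" using Zpos by (simp add: p_def Z_def sum_divide_distrib[symmetric])
  have trm: "p a * (c a - c j) \<le> \<iota>" for a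
  proof (cases "c a \<le> c j")
    case True
    have "p a * (c a - c j) \<le> 0" using True Zpos by (intro mult_nonneg_nonpos) (auto simp: p_def)
    then show ?thesis using io by linarith
  next
    case False
    define t where "t = c a - c j"
    have t: "0 < t" using False by (simp add: t_def)
    have "p a \<le> exp (- c a / \<iota>) / exp (- c j / \<iota>)"
      unfolding p_def using Zge Zpos by (intro divide_left_mono) (auto intro: mult_pos_pos)
    also have "\<dots> = exp (- (t / \<iota>))" by (simp add: t_def exp_diff[symmetric] diff_divide_distrib)
    finally have pa: "p a \<le> exp (- (t / \<iota>))" .
    have e1: "t / \<iota> < exp (t / \<iota>)" using exp_ge_add_one_self[of "t/\<iota>"] by linarith
    then have "t < \<iota> * exp (t / \<iota>)" using io by (simp add: divide_less_eq mult.commute)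
    then have e2: "t * exp (- (t / \<iota>)) < \<iota>" by (simp add: exp_minus field_simps)
    have "p a * t \<le> exp (- (t / \<iota>)) * t" using pa t by (intro mult_right_mono) auto
    then show ?thesis using e2 unfolding t_def by (simp add: mult.commute)
  qed
  have "(\<Sum>a\<in>UNIV. p a * c a) = (\<Sum>a\<in>UNIV. p a * (c a - c j)) + c j * (\<Sum>a\<in>UNIV. p a)"
    by (simp add: sum_distrib_left right_diff_distrib sum_subtractf algebra_simps)
  also have "(\<Sum>a\<in>UNIV. p a * (c a - c j)) \<le> of_nat (card (UNIV::'n set)) * \<iota>"
    by (rule sum_bounded_above) (rule trm)
  finally show ?thesis using s1 by (simp add: p_def Z_def)
qed

locale qs =
  fixes lam :: real and mu :: "'n::finite \<Rightarrow> real" and w :: "'n \<Rightarrow> real" and \<iota> :: real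
  assumes lam: "0 < lam" and mu: "\<And>n. 0 < mu n" and w: "\<And>a. 0 < w a" and iota: "0 < \<iota>"
    and stab: "lam < (\<Sum>n\<in>UNIV. mu n)"
begin

abbreviation "Kq \<equiv> qs_jump_kernel lam mu w \<iota>"
definition up :: "('n \<Rightarrow> nat) \<Rightarrow> 'n \<Rightarrow> ('n \<Rightarrow> nat)" where "up x a = x(a := x a + 1)"
definition dn :: "('n \<Rightarrow> nat) \<Rightarrow> 'n \<Rightarrow> ('n \<Rightarrow> nat)" where "dn x n = x(n := x n - 1)"
abbreviation "sm x a \<equiv> softmax_wsq w \<iota> x a"
abbreviation "R x \<equiv> qs_total_rate lam mu x"
definition Succ :: "('n \<Rightarrow> nat) \<Rightarrow> ('n \<Rightarrow> nat) set" where
  "Succ x = range (up x) \<union> dn x ` {n. 1 \<le> x n}"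

lemma sm_pos: "0 < sm x a"
  unfolding softmax_wsq_def by (intro divide_pos_pos sum_pos) auto

lemma sm_sum: "(\<Sum>a\<in>UNIV. sm x a) = 1"
proof -
  have "0 < (\<Sum>b\<in>UNIV. exp (- w b * (2 * real (x b) + 1) / \<iota>))" by (intro sum_pos) auto
  then show ?thesis unfolding softmax_wsq_def by (simp add: sum_divide_distrib[symmetric])
qed

lemma R_ge: "lam \<le> R x"
proof -
  have "0 \<le> (\<Sum>n\<in>UNIV. if 1 \<le> x n then mu n else 0)" by (intro sum_nonneg) (simp add: less_imp_le mu)
  then show ?thesis by (simp add: qs_total_rate_def)
qed

lemma R_pos: "0 < R x" using R_ge[of x] lam by linarith

lemma R_le: "R x \<le> lam + (\<Sum>n\<in>UNIV. mu n)"
proof -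
  have "(\<Sum>n\<in>UNIV. if 1 \<le> x n then mu n else 0) \<le> (\<Sum>n\<in>UNIV. mu n)" by (intro sum_mono) (simp add: less_imp_le mu)
  then show ?thesis by (simp add: qs_total_rate_def)
qed

lemma Succ_fin: "finite (Succ x)" unfolding Succ_def by auto

lemma rate_nonneg: "0 \<le> qs_rate lam mu w \<iota> x y"
  unfolding qs_rate_def using lam mu sm_pos
  by (intro add_nonneg_nonneg sum_nonneg) (auto intro: less_imp_le)

lemma rate_zero: "y \<notin> Succ x \<Longrightarrow> qs_rate lam mu w \<iota> x y = 0"
proof -
  assume y: "y \<notin> Succ x"
  then have h1: "\<And>a. y \<noteq> x(a := x a + 1)" and h2: "\<And>n. 1 \<le> x n \<Longrightarrow> y \<noteq> x(n := x n - 1)"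
    by (auto simp: Succ_def up_def dn_def image_iff)
  have "(\<Sum>a\<in>UNIV. if y = x(a := x a + 1) then lam * sm x a else 0) = 0" using h1 by (intro sum.neutral) auto
  moreover have "(\<Sum>n\<in>UNIV. if 1 \<le> x n \<and> y = x(n := x n - 1) then mu n else 0) = 0" using h2 by (intro sum.neutral) auto
  ultimately show ?thesis by (simp add: qs_rate_def)
qed

lemma rate_sum: "(\<Sum>y\<in>Succ x. qs_rate lam mu w \<iota> x y * g y) =
   lam * (\<Sum>a\<in>UNIV. sm x a * g (up x a)) + (\<Sum>n\<in>UNIV. if 1 \<le> x n then mu n * g (dn x n) else 0)"
proof -
  have A: "(\<Sum>y\<in>Succ x. (\<Sum>a\<in>UNIV. if y = x(a := x a + 1) then lam * sm x a else 0) * g y)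
       = (\<Sum>a\<in>UNIV. \<Sum>y\<in>Succ x. if y = up x a then lam * sm x a * g y else 0)"
    unfolding sum_distrib_right up_def by (subst sum.swap) (auto intro!: sum.cong)
  also have "\<dots> = (\<Sum>a\<in>UNIV. lam * sm x a * g (up x a))"
    using Succ_fin[of x] by (intro sum.cong) (auto simp: Succ_def)
  finally have A': "(\<Sum>y\<in>Succ x. (\<Sum>a\<in>UNIV. if y = x(a := x a + 1) then lam * sm x a else 0) * g y)
       = lam * (\<Sum>a\<in>UNIV. sm x a * g (up x a))" by (simp add: sum_distrib_left mult.assoc)
  have B: "(\<Sum>y\<in>Succ x. (\<Sum>n\<in>UNIV. if 1 \<le> x n \<and> y = x(n := x n - 1) then mu n else 0) * g y)
       = (\<Sum>n\<in>UNIV. \<Sum>y\<in>Succ x. if y = dn x n then (if 1 \<le> x n then mu n * g y else 0) else 0)"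
    unfolding sum_distrib_right dn_def by (subst sum.swap) (auto intro!: sum.cong)
  also have "\<dots> = (\<Sum>n\<in>UNIV. if 1 \<le> x n then mu n * g (dn x n) else 0)"
    using Succ_fin[of x] by (intro sum.cong) (auto simp: Succ_def)
  finally have B': "(\<Sum>y\<in>Succ x. (\<Sum>n\<in>UNIV. if 1 \<le> x n \<and> y = x(n := x n - 1) then mu n else 0) * g y)
       = (\<Sum>n\<in>UNIV. if 1 \<le> x n then mu n * g (dn x n) else 0)" .
  show ?thesis unfolding qs_rate_def distrib_right sum.distrib A' B' ..
qed


definition qf :: "('n \<Rightarrow> nat) \<Rightarrow> ('n \<Rightarrow> nat) \<Rightarrow> real" where
  "qf x y = qs_rate lam mu w \<iota> x y / R x"

lemma qf_nonneg: "0 \<le> qf x y"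
  unfolding qf_def using rate_nonneg R_pos by (simp add: less_imp_le)

lemma qf_sum: "(\<Sum>y\<in>Succ x. qf x y * g y) =
   (lam * (\<Sum>a\<in>UNIV. sm x a * g (up x a)) + (\<Sum>n\<in>UNIV. if 1 \<le> x n then mu n * g (dn x n) else 0)) / R x"
  unfolding qf_def rate_sum[symmetric] by (simp add: sum_divide_distrib)

lemma qf_sum1: "(\<Sum>y\<in>Succ x. qf x y) = 1"
proof -
  have "(\<Sum>y\<in>Succ x. qf x y) = (\<Sum>y\<in>Succ x. qf x y * 1)" by simp
  also have "\<dots> = R x / R x"
  proof -
    have e: "(\<Sum>n\<in>UNIV. if 1 \<le> x n then mu n * 1 else 0) = (\<Sum>n\<in>UNIV. if 1 \<le> x n then mu n else 0)" by (simp only: mult_1_right)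
    show ?thesis unfolding qf_sum e by (simp add: sm_sum qs_total_rate_def)
  qed
  finally show ?thesis using R_pos[of x] by simp
qed

lemma qf_integral: "(\<integral>\<^sup>+y. ennreal (qf x y) \<partial>count_space UNIV) = 1"
proof -
  have "(\<integral>\<^sup>+y. ennreal (qf x y) \<partial>count_space UNIV) = (\<Sum>y\<in>Succ x. ennreal (qf x y))"
    by (rule nn_integral_count_space'[OF Succ_fin]) (auto simp: qf_def rate_zero)
  also have "\<dots> = ennreal (\<Sum>y\<in>Succ x. qf x y)" by (rule sum_ennreal) (rule qf_nonneg)
  finally show ?thesis by (simp add: qf_sum1)
qed

lemma pmf_Kq: "pmf (Kq x) y = qf x y"
  unfolding qs_jump_kernel_def qf_def[symmetric]
  by (rule pmf_embed_pmf) (auto simp: qf_nonneg qf_integral)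

lemma set_Kq: "set_pmf (Kq x) \<subseteq> Succ x"
  using rate_zero by (fastforce simp: set_pmf_iff pmf_Kq qf_def)

sublocale fmc Kq
  by unfold_locales (rule finite_subset[OF set_Kq Succ_fin])

lemma Ex_formula: "Ex x g =
   (lam * (\<Sum>a\<in>UNIV. sm x a * g (up x a)) + (\<Sum>n\<in>UNIV. if 1 \<le> x n then mu n * g (dn x n) else 0)) / R x"
proof -
  have "Ex x g = (\<Sum>z\<in>Succ x. pmf (Kq x) z * g z)"
    unfolding Ex_def by (rule sum.mono_neutral_left[OF Succ_fin set_Kq]) (auto simp: set_pmf_iff)
  then show ?thesis by (simp add: pmf_Kq qf_sum)
qed

lemma pos_up: "0 < pmf (Kq x) (up x a)"
proof -
  have "lam * sm x a \<le> (\<Sum>b\<in>UNIV. if up x a = x(b := x b + 1) then lam * sm x b else 0)"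
    using member_le_sum[of a UNIV "\<lambda>b. if up x a = x(b := x b + 1) then lam * sm x b else 0"]
      lam sm_pos by (auto simp: up_def less_imp_le)
  moreover have "0 \<le> (\<Sum>n\<in>UNIV. if 1 \<le> x n \<and> up x a = x(n := x n - 1) then mu n else 0)"
    using mu by (intro sum_nonneg) (auto intro: less_imp_le)
  ultimately have "lam * sm x a \<le> qs_rate lam mu w \<iota> x (up x a)" unfolding qs_rate_def by linarith
  moreover have "0 < lam * sm x a" using lam sm_pos by simp
  ultimately show ?thesis unfolding pmf_Kq qf_def using R_pos by simp
qed

lemma pos_dn: "1 \<le> x n \<Longrightarrow> 0 < pmf (Kq x) (dn x n)"
proof -
  assume xn: "1 \<le> x n"
  have "mu n \<le> (\<Sum>m\<in>UNIV. if 1 \<le> x m \<and> dn x n = x(m := x m - 1) then mu m else 0)"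
    using member_le_sum[of n UNIV "\<lambda>m. if 1 \<le> x m \<and> dn x n = x(m := x m - 1) then mu m else 0"]
      mu xn by (auto simp: dn_def less_imp_le)
  moreover have "0 \<le> (\<Sum>b\<in>UNIV. if dn x n = x(b := x b + 1) then lam * sm x b else 0)"
    using lam sm_pos by (intro sum_nonneg) (auto intro: less_imp_le)
  ultimately have "mu n \<le> qs_rate lam mu w \<iota> x (dn x n)" unfolding qs_rate_def by linarith
  then show ?thesis unfolding pmf_Kq qf_def using R_pos mu[of n] by simp
qed

lemma step_pos: "0 < pmf (Kq x) z \<Longrightarrow> 0 < pmf (nstep Kq m z) y \<Longrightarrow> 0 < pmf (nstep Kq (Suc m) x) y"
proof -
  assume a: "0 < pmf (Kq x) z" and b: "0 < pmf (nstep Kq m z) y"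
  have z: "z \<in> set_pmf (Kq x)" using a by (simp add: set_pmf_iff)
  have "0 < pmf (Kq x) z * pmf (nstep Kq m z) y" using a b by simp
  also have "\<dots> \<le> pmf (nstep Kq (Suc m) x) y"
    unfolding P_Suc by (rule Ex_ge_term[OF _ z]) simp
  finally show ?thesis .
qed

definition dist :: "('n \<Rightarrow> nat) \<Rightarrow> ('n \<Rightarrow> nat) \<Rightarrow> nat" where
  "dist x y = (\<Sum>a\<in>UNIV. (x a - y a) + (y a - x a))"

lemma reach: "\<exists>n. 0 < pmf (nstep Kq n x) y"
proof (induction "dist x y" arbitrary: x rule: less_induct)
  case less
  show ?case
  proof (cases "x = y")
    case True
    then show ?thesis by (intro exI[of _ 0]) (simp add: P_0)
  next
    case False
    then obtain a where a: "x a \<noteq> y a" by auto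
    show ?thesis
    proof (cases "x a < y a")
      case True
      have "dist (up x a) y < dist x y"
        unfolding dist_def
        by (rule sum_strict_mono_ex1) (use True in \<open>auto simp: up_def intro!: bexI[of _ a]\<close>)
      then obtain m where "0 < pmf (nstep Kq m (up x a)) y" using less by blast
      then show ?thesis using step_pos[OF pos_up] by blast
    next
      case False
      then have xa: "y a < x a" using a by simp
      have "dist (dn x a) y < dist x y"
        unfolding dist_def
        by (rule sum_strict_mono_ex1) (use xa in \<open>auto simp: dn_def intro!: bexI[of _ a]\<close>)
      then obtain m where "0 < pmf (nstep Kq m (dn x a)) y" using less by blast
      moreover have "1 \<le> x a" using xa by simp
      ultimately show ?thesis using step_pos[OF pos_dn] by blast
    qed
  qed
qed

lemma irr_q: "mc_irreducible Kq"
  unfolding mc_irreducible_def using reach by blast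

lemma pred_fin_q: "finite {z. y \<in> set_pmf (Kq z)}"
proof -
  have "{z. y \<in> set_pmf (Kq z)} \<subseteq> range (\<lambda>a. y(a := y a - 1)) \<union> range (\<lambda>n. y(n := y n + 1))"
  proof
    fix z assume "z \<in> {z. y \<in> set_pmf (Kq z)}"
    then have "y \<in> Succ z" using set_Kq by auto
    then consider (u) a where "y = up z a" | (d) n where "1 \<le> z n" "y = dn z n"
      unfolding Succ_def by auto
    then show "z \<in> range (\<lambda>a. y(a := y a - 1)) \<union> range (\<lambda>n. y(n := y n + 1))"
    proof cases
      case u
      have "z = y(a := y a - 1)" using u by (auto simp: up_def fun_eq_iff)
      then show ?thesis by blast
    next
      case d
      have "z = y(n := y n + 1)" using d by (auto simp: dn_def fun_eq_iff)
      then show ?thesis by blast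
    qed
  qed
  then show ?thesis by (rule finite_subset) auto
qed


definition V :: "('n \<Rightarrow> nat) \<Rightarrow> real" where "V x = (\<Sum>a\<in>UNIV. w a * real (x a) ^ 2)"
definition Sx :: "('n \<Rightarrow> nat) \<Rightarrow> real" where "Sx x = (\<Sum>n\<in>UNIV. mu n * w n * real (x n))"
definition rho :: real where "rho = lam / (\<Sum>n\<in>UNIV. mu n)"
definition Rmax :: real where "Rmax = lam + (\<Sum>n\<in>UNIV. mu n)"
definition Wc :: real where "Wc = (\<Sum>n\<in>UNIV. mu n * w n)"
definition Bc :: real where "Bc = 2 * Wc + lam * real CARD('n) * \<iota>"
definition ff :: "('n \<Rightarrow> nat) \<Rightarrow> real" where "ff x = 2 * (1 - rho) * Sx x / Rmax"
definition bb :: real where "bb = Bc / lam"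

lemma Smu_pos: "0 < (\<Sum>n\<in>UNIV. mu n)" using lam stab by linarith
lemma rho_lt1: "rho < 1" using stab Smu_pos by (simp add: rho_def)
lemma rho_nn: "0 \<le> rho" using lam Smu_pos by (simp add: rho_def)
lemma Rmax_pos: "0 < Rmax" using lam Smu_pos by (simp add: Rmax_def)
lemma Wc_nn: "0 \<le> Wc" unfolding Wc_def using mu w by (intro sum_nonneg) (auto intro: less_imp_le)
lemma Sx_nn: "0 \<le> Sx x" unfolding Sx_def using mu w by (intro sum_nonneg mult_nonneg_nonneg) (simp_all add: less_imp_le)
lemma Bc_nn: "0 \<le> Bc" unfolding Bc_def using Wc_nn lam iota by simp
lemma V_nn: "0 \<le> V x" unfolding V_def using w by (intro sum_nonneg mult_nonneg_nonneg) (simp_all add: less_imp_le)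
lemma ff_nn: "0 \<le> ff x" unfolding ff_def using rho_lt1 Sx_nn Rmax_pos by simp

lemma V_up: "V (up x a) = V x + w a * (2 * real (x a) + 1)"
proof -
  have "V (up x a) = (\<Sum>b\<in>UNIV. w b * real (x b) ^ 2 + (if b = a then w a * (2 * real (x a) + 1) else 0))"
    unfolding V_def up_def by (intro sum.cong) (auto simp: power2_eq_square algebra_simps)
  then show ?thesis by (simp add: sum.distrib V_def)
qed

lemma V_dn: "1 \<le> x n \<Longrightarrow> V (dn x n) = V x - w n * (2 * real (x n) - 1)"
proof -
  assume xn: "1 \<le> x n"
  have "V (dn x n) = (\<Sum>b\<in>UNIV. w b * real (x b) ^ 2 - (if b = n then w n * (2 * real (x n) - 1) else 0))"
    unfolding V_def dn_def using xn by (intro sum.cong) (auto simp: power2_eq_square algebra_simps of_nat_diff)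
  then show ?thesis by (simp add: sum_subtractf V_def)
qed

abbreviation "cc x a \<equiv> w a * (2 * real (x a) + 1)"

lemma sm_bound: "(\<Sum>a\<in>UNIV. sm x a * cc x a) \<le> cc x j + real CARD('n) * \<iota>"
proof -
  have "sm x a = exp (- cc x a / \<iota>) / (\<Sum>b\<in>UNIV. exp (- cc x b / \<iota>))" for a
    unfolding softmax_wsq_def by simp
  then show ?thesis using softmax_bound[OF iota, of "cc x" j] by simp
qed

lemma lam_bound: "lam * (\<Sum>a\<in>UNIV. sm x a * cc x a) \<le> rho * (2 * Sx x + Wc) + lam * real CARD('n) * \<iota>"
proof -
  define T where "T = (\<Sum>a\<in>UNIV. sm x a * cc x a)"
  have "(\<Sum>n\<in>UNIV. mu n) * T = (\<Sum>j\<in>UNIV. mu j * T)" by (simp add: sum_distrib_right)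
  also have "\<dots> \<le> (\<Sum>j\<in>UNIV. mu j * (cc x j + real CARD('n) * \<iota>))"
    unfolding T_def using mu by (intro sum_mono mult_left_mono sm_bound) (auto intro: less_imp_le)
  also have "\<dots> = (2 * Sx x + Wc) + real CARD('n) * \<iota> * (\<Sum>n\<in>UNIV. mu n)"
    unfolding Sx_def Wc_def by (simp add: algebra_simps sum.distrib sum_distrib_left sum_distrib_right)
  finally have "(\<Sum>n\<in>UNIV. mu n) * T \<le> (2 * Sx x + Wc) + real CARD('n) * \<iota> * (\<Sum>n\<in>UNIV. mu n)" .
  then have "T \<le> (2 * Sx x + Wc) / (\<Sum>n\<in>UNIV. mu n) + real CARD('n) * \<iota>"
    using Smu_pos by (simp add: field_simps)
  then have "lam * T \<le> lam * ((2 * Sx x + Wc) / (\<Sum>n\<in>UNIV. mu n) + real CARD('n) * \<iota>)"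
    using lam by (intro mult_left_mono) auto
  moreover have "lam * ((2 * Sx x + Wc) / (\<Sum>n\<in>UNIV. mu n) + real CARD('n) * \<iota>) =
      lam / (\<Sum>n\<in>UNIV. mu n) * (2 * Sx x + Wc) + lam * real CARD('n) * \<iota>"
    by (simp add: algebra_simps add_divide_distrib)
  ultimately show ?thesis unfolding T_def rho_def by simp
qed

abbreviation "E2 x \<equiv> (\<Sum>n\<in>UNIV. if 1 \<le> x n then mu n * (w n * (2 * real (x n) - 1)) else 0)"

lemma E2_bound: "2 * Sx x - Wc \<le> E2 x"
proof -
  have "2 * Sx x - Wc = (\<Sum>n\<in>UNIV. mu n * (w n * (2 * real (x n) - 1)))"
    unfolding Sx_def Wc_def by (simp add: algebra_simps sum.distrib sum_subtractf sum_distrib_left)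
  also have "\<dots> \<le> E2 x"
  proof (intro sum_mono)
    fix n
    have "0 < mu n * w n" using mu w by simp
    then show "mu n * (w n * (2 * real (x n) - 1)) \<le> (if 1 \<le> x n then mu n * (w n * (2 * real (x n) - 1)) else 0)"
      by (auto simp: not_le algebra_simps)
  qed
  finally show ?thesis .
qed

lemma Ex_V: "Ex x V = V x + (lam * (\<Sum>a\<in>UNIV. sm x a * cc x a) - E2 x) / R x"
proof -
  have A: "lam * (\<Sum>a\<in>UNIV. sm x a * V (up x a)) = lam * V x + lam * (\<Sum>a\<in>UNIV. sm x a * cc x a)"
  proof -
    have "(\<Sum>a\<in>UNIV. sm x a * V (up x a)) = (\<Sum>a\<in>UNIV. sm x a * V x + sm x a * cc x a)"
      by (simp add: V_up algebra_simps)
    also have "\<dots> = V x + (\<Sum>a\<in>UNIV. sm x a * cc x a)"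
      by (simp add: sum.distrib sum_distrib_right[symmetric] sm_sum)
    finally show ?thesis by (simp add: algebra_simps)
  qed
  have B: "(\<Sum>n\<in>UNIV. if 1 \<le> x n then mu n * V (dn x n) else 0) =
      (\<Sum>n\<in>UNIV. if 1 \<le> x n then mu n else 0) * V x - E2 x"
  proof -
    have "(\<Sum>n\<in>UNIV. if 1 \<le> x n then mu n * V (dn x n) else 0) =
        (\<Sum>n\<in>UNIV. (if 1 \<le> x n then mu n else 0) * V x - (if 1 \<le> x n then mu n * (w n * (2 * real (x n) - 1)) else 0))"
      by (intro sum.cong) (auto simp: V_dn algebra_simps)
    then show ?thesis by (simp add: sum_subtractf sum_distrib_right)
  qed
  have "Ex x V = (R x * V x + (lam * (\<Sum>a\<in>UNIV. sm x a * cc x a) - E2 x)) / R x"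
    unfolding Ex_formula A B by (simp add: qs_total_rate_def algebra_simps)
  then show ?thesis using R_pos[of x] by (simp add: field_simps)
qed

lemma drift_q: "Ex x V \<le> V x - ff x + bb"
proof -
  define D where "D = lam * (\<Sum>a\<in>UNIV. sm x a * cc x a) - E2 x"
  have "D \<le> rho * (2 * Sx x + Wc) + lam * real CARD('n) * \<iota> - (2 * Sx x - Wc)"
    unfolding D_def using lam_bound[of x] E2_bound[of x] by linarith
  also have "\<dots> \<le> - (2 * (1 - rho) * Sx x) + Bc"
  proof -
    have rW: "rho * Wc \<le> Wc" by (rule mult_left_le_one_le[OF Wc_nn rho_nn]) (use rho_lt1 in simp)
    then show ?thesis unfolding Bc_def by (simp add: algebra_simps)
  qed
  finally have D: "D \<le> - (2 * (1 - rho) * Sx x) + Bc" .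
  have P: "0 \<le> 2 * (1 - rho) * Sx x" using rho_lt1 Sx_nn by simp
  have "D / R x \<le> (- (2 * (1 - rho) * Sx x) + Bc) / R x"
    using D R_pos by (intro divide_right_mono) (auto intro: less_imp_le)
  moreover have "(- (2 * (1 - rho) * Sx x) + Bc) / R x = - (2 * (1 - rho) * Sx x / R x) + Bc / R x"
    by (simp only: add_divide_distrib minus_divide_left)
  ultimately have t1: "D / R x \<le> - (2 * (1 - rho) * Sx x / R x) + Bc / R x" by simp
  have t2: "2 * (1 - rho) * Sx x / Rmax \<le> 2 * (1 - rho) * Sx x / R x"
    using P R_pos[of x] R_le[of x] by (intro divide_left_mono) (auto simp: Rmax_def)
  have t3: "Bc / R x \<le> Bc / lam" using Bc_nn R_ge[of x] lam by (intro divide_left_mono) auto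
  have "D / R x \<le> - ff x + bb"
    unfolding ff_def bb_def using t1 t2 t3 by linarith
  then show ?thesis unfolding Ex_V D_def[symmetric] by simp
qed


lemma ff_fin: "finite {x. ff x \<le> L}"
proof -
  define m0 where "m0 = Min (range (\<lambda>n. mu n * w n))"
  have m0_pos: "0 < m0" unfolding m0_def using mu w by (subst Min_gr_iff) auto
  have m0_le: "m0 \<le> mu n * w n" for n unfolding m0_def by (rule Min_le) auto
  define L' where "L' = L * Rmax / (2 * (1 - rho))"
  define Kb where "Kb = nat \<lceil>L' / m0\<rceil>"
  have "{x. ff x \<le> L} \<subseteq> {x. \<forall>n. x n \<le> Kb}"
  proof (intro subsetI CollectI allI)
    fix x n assume "x \<in> {x. ff x \<le> L}"
    then have fx: "ff x \<le> L" by simp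
    have c: "0 < 2 * (1 - rho)" using rho_lt1 by simp
    have "Sx x \<le> L'"
      using fx c Rmax_pos unfolding ff_def L'_def by (simp add: field_simps)
    moreover have "mu n * w n * real (x n) \<le> Sx x"
      unfolding Sx_def using mu w
      by (intro member_le_sum[of n UNIV "\<lambda>n. mu n * w n * real (x n)"]) (auto simp: less_imp_le intro!: mult_nonneg_nonneg)
    moreover have "m0 * real (x n) \<le> mu n * w n * real (x n)"
      using m0_le[of n] by (intro mult_right_mono) auto
    ultimately have "m0 * real (x n) \<le> L'" by linarith
    then have "real (x n) \<le> L' / m0" using m0_pos by (simp add: field_simps)
    then have "\<lceil>real (x n)\<rceil> \<le> \<lceil>L' / m0\<rceil>" by (rule ceiling_mono)
    then have "int (x n) \<le> \<lceil>L' / m0\<rceil>" by simp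
    then have "nat (int (x n)) \<le> Kb" unfolding Kb_def by (rule nat_mono)
    then show "x n \<le> Kb" by simp
  qed
  moreover have "finite {x::'n \<Rightarrow> nat. \<forall>n. (n \<in> UNIV \<longrightarrow> x n \<in> {..Kb}) \<and> (n \<notin> UNIV \<longrightarrow> x n = 0)}"
    by (rule finite_set_of_finite_funs) auto
  moreover have "{x::'n \<Rightarrow> nat. \<forall>n. (n \<in> UNIV \<longrightarrow> x n \<in> {..Kb}) \<and> (n \<notin> UNIV \<longrightarrow> x n = 0)} = {x. \<forall>n. x n \<le> Kb}"
    by auto
  ultimately show ?thesis by (metis finite_subset)
qed
theorem qs_main: "mc_irreducible Kq \<and> mc_ergodic Kq \<and> mc_positive_harris Kq"
proof -
  interpret d: drift_mc Kq V ff bb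
    by unfold_locales (simp_all add: fin V_nn ff_nn drift_q ff_fin irr_q pred_fin_q)
  show ?thesis using d.drift_main irr_q by blast
qed

end

theorem mainTheorem3:
  fixes lam :: real and mu :: "'n::finite \<Rightarrow> real"
  assumes "lam > 0"
    and "\<forall>n. mu n > 0"
    and "lam < (\<Sum>n\<in>UNIV. mu n)"
  shows "\<exists>\<iota>0 > 0. \<forall>\<iota>. 0 < \<iota> \<and> \<iota> < \<iota>0 \<longrightarrow>
           (\<forall>w :: 'n \<Rightarrow> real. (\<forall>a. w a > 0) \<longrightarrow>
              mc_irreducible (qs_jump_kernel lam mu w \<iota>) \<and>
              mc_ergodic (qs_jump_kernel lam mu w \<iota>) \<and>
              mc_positive_harris (qs_jump_kernel lam mu w \<iota>))"
proof -
  have main: "mc_irreducible (qs_jump_kernel lam mu w \<iota>) \<and>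
              mc_ergodic (qs_jump_kernel lam mu w \<iota>) \<and>
              mc_positive_harris (qs_jump_kernel lam mu w \<iota>)"
    if i: "0 < \<iota>" and wpos: "\<forall>a. 0 < w a" for \<iota> :: real and w :: "'n \<Rightarrow> real"
  proof -
    interpret q: qs lam mu w \<iota>
      by unfold_locales (use assms i wpos in auto)
    show ?thesis by (rule q.qs_main)
  qed
  show ?thesis by (intro exI[of _ "1::real"] conjI allI impI) (simp_all add: main)
qed


end
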